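(* For every positive integer $n \neq 7$, we have $N_n(\frac{1}{4}) = \lceil \frac{n}{7} \rceil$; moreover, $1 \le N_7(\frac{1}{4}) \le 2$.
   Context: For a positive integer $n$, let $\mathcal{P}_n$ denote the family of all sets of $n$ points in the Euclidean plane such that the distance between any two points of the set is at most $1$. For $0 < r \le 1$, let $N_n(r)$ be the largest integer $k$ such that for every $P \in \mathcal{P}_n$ there exists a circle of radius $r$ (i.e. a closed disc of radius $r$) which covers (contains) at least $k$ points of $P$. *)

theory Defs
  imports "HOL-Analysis.Analysis"
begin

definition point_family :: "nat \<Rightarrow> (real^2) set set" where
  "point_family n = {P. finite P \<and> card P = n \<and> (\<forall>x\<in>P. \<forall>y\<in>P. dist x y \<le> 1)}"

definition N_cover :: "nat \<Rightarrow> real \<Rightarrow> nat" where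
  "N_cover n r = (GREATEST k. \<forall>P\<in>point_family n. \<exists>c. k \<le> card (P \<inter> cball c r))"

end

theory Submission
  imports Defs
begin

lemma ab_core:
  fixes a b :: real
  assumes "0 \<le> a" "0 \<le> b" "a + b/2 \<le> 2" "b + a/2 \<le> 2"
  shows "a^2 + a*b + b^2 \<le> 1 \<or> a^2 + a*b + b^2 \<le> 3*(a+b) - 2"
proof (cases "a^2 + a*b + b^2 \<le> 1")
  case True then show ?thesis by simp
next
  case False
  have p0: "0 \<le> a*b" using assms by simp
  have s1: "1 < a + b"
  proof (rule ccontr)
    assume "\<not> 1 < a + b"
    then have "(a+b)^2 \<le> 1" using assms by (simp add: power_le_one)
    then show False using False p0 by (simp add: power2_eq_square algebra_simps)
  qed
  show ?thesis
  proof (cases "a + b \<le> 2")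
    case True
    have "(a+b-1)*(a+b-2) \<le> 0" using True s1 by (simp add: mult_nonneg_nonpos)
    then show ?thesis using p0 by (simp add: power2_eq_square algebra_simps)
  next
    case False
    have pr: "0 \<le> (2 - a - b/2)*(2 - b - a/2)" using assms by simp
    have "(a+b-2)*(a+b-3) \<le> 0" using False assms by (simp add: mult_nonneg_nonpos)
    then show ?thesis using pr by (simp add: power2_eq_square algebra_simps)
  qed
qed

lemma sector_AB:
  fixes A B :: real
  assumes "A \<le> 1/2" "B \<le> 1/2" "B \<le> 2*A" "A \<le> 2*B"
  shows "(4/3)*(A^2 - A*B + B^2) \<le> 1/16 \<or> (4/3)*(A^2 - A*B + B^2) - (A+B)/2 + 1/8 \<le> 0"
proof -
  define a where "a = (16*A - 8*B)/3"
  define b where "b = (16*B - 8*A)/3"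
  define Q where "Q = (4/3)*(A^2 - A*B + B^2)"
  have e1: "a^2 + a*b + b^2 = 16 * Q"
    unfolding a_def b_def Q_def by (simp add: power2_eq_square field_simps)
  have e2: "a + b = (8*A + 8*B)/3" unfolding a_def b_def by (simp add: field_simps)
  have h1: "0 \<le> a" "0 \<le> b" "a + b/2 \<le> 2" "b + a/2 \<le> 2"
    unfolding a_def b_def using assms by (simp_all add: field_simps)
  have "a^2 + a*b + b^2 \<le> 1 \<or> a^2 + a*b + b^2 \<le> 3*(a+b) - 2"
    by (rule ab_core[OF h1])
  then have "Q \<le> 1/16 \<or> Q - (A+B)/2 + 1/8 \<le> 0"
  proof
    assume "a^2 + a*b + b^2 \<le> 1" then show ?thesis using e1 by (intro disjI1) argo
  next
    assume "a^2 + a*b + b^2 \<le> 3*(a+b) - 2" then show ?thesis using e1 e2 by (intro disjI2) argo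
  qed
  then show ?thesis unfolding Q_def .
qed

lemma hex_cover:
  fixes X Y N :: real
  assumes "\<bar>X\<bar> \<le> 1/2" "\<bar>Y\<bar> \<le> 1/2" "\<bar>Y - X\<bar> \<le> 1/2"
    and N: "N = (4/3)*(X^2 - X*Y + Y^2)"
  shows "N \<le> 1/16 \<or> N - (X+Y)/2 + 1/8 \<le> 0 \<or> N - (2*Y-X)/2 + 1/8 \<le> 0
     \<or> N - (Y-2*X)/2 + 1/8 \<le> 0 \<or> N + (X+Y)/2 + 1/8 \<le> 0
     \<or> N - (X-2*Y)/2 + 1/8 \<le> 0 \<or> N - (2*X-Y)/2 + 1/8 \<le> 0"
proof -
  have c: "(Y \<le> 2*X \<and> X \<le> 2*Y) \<or> (Y - X \<le> 2*Y \<and> Y \<le> 2*(Y-X)) \<or> (-X \<le> 2*(Y-X) \<and> Y - X \<le> 2*(-X))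
     \<or> (-Y \<le> 2*(-X) \<and> -X \<le> 2*(-Y)) \<or> (X - Y \<le> 2*(-Y) \<and> -Y \<le> 2*(X-Y)) \<or> (X \<le> 2*(X-Y) \<and> X - Y \<le> 2*X)"
    by smt
  have i1: "N = (4/3)*(Y^2 - Y*(Y-X) + (Y-X)^2)" unfolding N by (simp add: power2_eq_square algebra_simps)
  have i2: "N = (4/3)*((Y-X)^2 - (Y-X)*(-X) + (-X)^2)" unfolding N by (simp add: power2_eq_square algebra_simps)
  have i3: "N = (4/3)*((-X)^2 - (-X)*(-Y) + (-Y)^2)" unfolding N by (simp add: power2_eq_square algebra_simps)
  have i4: "N = (4/3)*((-Y)^2 - (-Y)*(X-Y) + (X-Y)^2)" unfolding N by (simp add: power2_eq_square algebra_simps)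
  have i5: "N = (4/3)*((X-Y)^2 - (X-Y)*X + X^2)" unfolding N by (simp add: power2_eq_square algebra_simps)
  from c show ?thesis
  proof (elim disjE conjE)
    assume h: "Y \<le> 2*X" "X \<le> 2*Y"
    have "N \<le> 1/16 \<or> N - (X+Y)/2 + 1/8 \<le> 0"
      unfolding N by (rule sector_AB) (use h assms in linarith)+
    then show ?thesis by argo
  next
    assume h: "Y - X \<le> 2*Y" "Y \<le> 2*(Y-X)"
    have "N \<le> 1/16 \<or> N - (Y+(Y-X))/2 + 1/8 \<le> 0"
      unfolding i1 by (rule sector_AB) (use h assms in linarith)+
    then show ?thesis by argo
  next
    assume h: "-X \<le> 2*(Y-X)" "Y - X \<le> 2*(-X)"
    have "N \<le> 1/16 \<or> N - ((Y-X)+(-X))/2 + 1/8 \<le> 0"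
      unfolding i2 by (rule sector_AB) (use h assms in linarith)+
    then show ?thesis by argo
  next
    assume h: "-Y \<le> 2*(-X)" "-X \<le> 2*(-Y)"
    have "N \<le> 1/16 \<or> N - ((-X)+(-Y))/2 + 1/8 \<le> 0"
      unfolding i3 by (rule sector_AB) (use h assms in linarith)+
    then show ?thesis by argo
  next
    assume h: "X - Y \<le> 2*(-Y)" "-Y \<le> 2*(X-Y)"
    have "N \<le> 1/16 \<or> N - ((-Y)+(X-Y))/2 + 1/8 \<le> 0"
      unfolding i4 by (rule sector_AB) (use h assms in linarith)+
    then show ?thesis by argo
  next
    assume h: "X \<le> 2*(X-Y)" "X - Y \<le> 2*X"
    have "N \<le> 1/16 \<or> N - ((X-Y)+X)/2 + 1/8 \<le> 0"
      unfolding i5 by (rule sector_AB) (use h assms in linarith)+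
    then show ?thesis by argo
  qed
qed

lemma inner2: "inner (x::real^2) y = x$1*y$1 + x$2*y$2"
  by (simp add: inner_vec_def sum_2)
lemma norm2sq: "(norm (x::real^2))^2 = (x$1)^2 + (x$2)^2"
  unfolding power2_norm_eq_inner inner2 by (simp add: power2_eq_square)
lemma dist2sq: "(dist (x::real^2) y)^2 = (x$1 - y$1)^2 + (x$2 - y$2)^2"
  by (simp add: dist_norm norm2sq)

lemma s3': "sqrt 3 * (sqrt 3 * x) = 3 * (x::real)" by (simp add: mult.assoc[symmetric])
lemma sc': "sin x * sin x = 1 - cos x * (cos x::real)"
  using sin_cos_squared_add[of x] by (simp add: power2_eq_square)

lemma sc'': "sin x * (sin x * t) = t - cos x * (cos x * (t::real))"
proof -
  have "sin x * (sin x * t) = (sin x * sin x) * t" by (simp only: mult.assoc)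
  also have "\<dots> = t - cos x * (cos x * t)" by (simp add: sc' algebra_simps)
  finally show ?thesis .
qed

definition proj :: "real \<Rightarrow> real^2 \<Rightarrow> real" where
  "proj \<phi> p = p$1 * cos \<phi> + p$2 * sin \<phi>"

lemma proj_diff: "proj \<phi> (p - q) = proj \<phi> p - proj \<phi> q"
  by (simp add: proj_def algebra_simps)
lemma proj_add: "proj \<phi> (p + q) = proj \<phi> p + proj \<phi> q"
  by (simp add: proj_def algebra_simps)

lemma proj_pi: "proj (\<phi> + pi) p = - proj \<phi> p"
  by (simp add: proj_def cos_add sin_add)

lemma cos_plus_60: "cos (\<phi> + pi/3) = cos \<phi> / 2 - sqrt 3 / 2 * sin \<phi>"
  by (simp add: cos_add cos_60 sin_60)
lemma sin_plus_60: "sin (\<phi> + pi/3) = sin \<phi> / 2 + sqrt 3 / 2 * cos \<phi>"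
  by (simp add: sin_add cos_60 sin_60)

lemma proj_2pi3: "proj (\<phi> + 2*pi/3) p = proj (\<phi> + pi/3) p - proj \<phi> p"
proof -
  have e: "\<phi> + 2*pi/3 = (\<phi> + pi/3) + pi/3" by simp
  have s3: "sqrt 3 * sqrt 3 = (3::real)" by simp
  show ?thesis unfolding e proj_def cos_plus_60[of "\<phi> + pi/3"] sin_plus_60[of "\<phi> + pi/3"]
    unfolding cos_plus_60 sin_plus_60
    by (simp add: field_simps s3')
qed

lemma proj_le_dist: "proj \<phi> p - proj \<phi> q \<le> dist p q"
proof -
  define a where "a = p$1 - q$1"
  define b where "b = p$2 - q$2"
  have e: "proj \<phi> p - proj \<phi> q = a * cos \<phi> + b * sin \<phi>"
    by (simp add: proj_def a_def b_def algebra_simps)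
  have d: "(dist p q)^2 = a^2 + b^2" by (simp add: dist2sq a_def b_def)
  have "(a * cos \<phi> + b * sin \<phi>)^2 + (a * sin \<phi> - b * cos \<phi>)^2 = a^2 + b^2"
    by (simp add: field_simps power2_eq_square sc')
  then have "(a * cos \<phi> + b * sin \<phi>)^2 \<le> a^2 + b^2"
    by (smt (verit) zero_le_power2)
  then have "(a * cos \<phi> + b * sin \<phi>)^2 \<le> (dist p q)^2" using d by simp
  then show ?thesis unfolding e by (rule power2_le_imp_le) simp
qed

lemma norm_hex:
  fixes y :: "real^2"
  shows "(norm y)^2 = (4/3) * ((proj \<phi> y)^2 - proj \<phi> y * proj (\<phi> + pi/3) y + (proj (\<phi> + pi/3) y)^2)"
proof -
  define X where "X = proj \<phi> y"
  define V where "V = - y$1 * sin \<phi> + y$2 * cos \<phi>"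
  have Y: "proj (\<phi> + pi/3) y = X/2 + sqrt 3/2 * V"
    unfolding X_def V_def proj_def cos_plus_60 sin_plus_60 by (simp add: algebra_simps)
  have s3: "sqrt 3 * sqrt 3 = (3::real)" by simp
  have "X^2 - X * (X/2 + sqrt 3/2 * V) + (X/2 + sqrt 3/2 * V)^2 = (3/4) * (X^2 + V^2)"
    by (simp add: power2_eq_square algebra_simps s3)
  moreover have "X^2 + V^2 = (y$1)^2 + (y$2)^2"
  proof -
    show ?thesis
      unfolding X_def V_def proj_def by (simp add: field_simps power2_eq_square sc'')
  qed
  ultimately show ?thesis unfolding Y X_def[symmetric] norm2sq by simp
qed

definition qv :: "real \<Rightarrow> real^2" where
  "qv \<phi> = vector [(cos \<phi> + cos (\<phi> + pi/3))/4, (sin \<phi> + sin (\<phi> + pi/3))/4]"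

lemma norm_qv:
  fixes y :: "real^2"
  shows "(norm (y - qv \<phi>))^2 = (norm y)^2 - (proj \<phi> y + proj (\<phi> + pi/3) y)/2 + 3/16"
proof -
  have s3: "sqrt 3 * sqrt 3 = (3::real)" by simp
  have sc: "(sin \<phi>)^2 + (cos \<phi>)^2 = 1" by (rule sin_cos_squared_add)
  have "(norm (y - qv \<phi>))^2 = (y$1 - (cos \<phi> + cos (\<phi> + pi/3))/4)^2 + (y$2 - (sin \<phi> + sin (\<phi> + pi/3))/4)^2"
    by (simp add: norm2sq qv_def)
  also have "\<dots> = (y$1)^2 + (y$2)^2 - (proj \<phi> y + proj (\<phi> + pi/3) y)/2 + 3/16"
    unfolding proj_def cos_plus_60 sin_plus_60
    by (simp add: field_simps s3' power2_eq_square sc')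
  finally show ?thesis by (simp add: norm2sq)
qed

lemma continuous_on_Max_img:
  fixes f :: "'b \<Rightarrow> real \<Rightarrow> real"
  assumes "finite P" "P \<noteq> {}" "\<And>p. p \<in> P \<Longrightarrow> continuous_on S (f p)"
  shows "continuous_on S (\<lambda>x. Max ((\<lambda>p. f p x) ` P))"
  using assms
proof (induction P rule: finite_ne_induct)
  case (singleton p) then show ?case by simp
next
  case (insert p P)
  have e: "(\<lambda>x. Max ((\<lambda>q. f q x) ` insert p P)) = (\<lambda>x. max (f p x) (Max ((\<lambda>q. f q x) ` P)))"
    using insert.hyps by (auto simp: Max_insert)
  show ?case unfolding e using insert by (auto intro!: continuous_on_max)
qed

lemma continuous_on_Min_img:
  fixes f :: "'b \<Rightarrow> real \<Rightarrow> real"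
  assumes "finite P" "P \<noteq> {}" "\<And>p. p \<in> P \<Longrightarrow> continuous_on S (f p)"
  shows "continuous_on S (\<lambda>x. Min ((\<lambda>p. f p x) ` P))"
  using assms
proof (induction P rule: finite_ne_induct)
  case (singleton p) then show ?case by simp
next
  case (insert p P)
  have e: "(\<lambda>x. Min ((\<lambda>q. f q x) ` insert p P)) = (\<lambda>x. min (f p x) (Min ((\<lambda>q. f q x) ` P)))"
    using insert.hyps by (auto simp: Min_insert)
  show ?case unfolding e using insert by (auto intro!: continuous_on_min)
qed

lemma cramer2:
  fixes D sa cb sb ca m0 m1 :: real
  assumes "D \<noteq> 0" "sa * ca - cb * sb = D"
  shows "((m0 * sa - m1 * sb)/D) * ca + ((m1 * ca - m0 * cb)/D) * sb = m0"
    and "((m0 * sa - m1 * sb)/D) * cb + ((m1 * ca - m0 * cb)/D) * sa = m1"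
proof -
  have "((m0 * sa - m1 * sb)/D) * ca + ((m1 * ca - m0 * cb)/D) * sb = m0 * (sa * ca - cb * sb)/D"
    using assms(1) by (simp add: field_simps)
  then show "((m0 * sa - m1 * sb)/D) * ca + ((m1 * ca - m0 * cb)/D) * sb = m0" using assms by simp
  have "((m0 * sa - m1 * sb)/D) * cb + ((m1 * ca - m0 * cb)/D) * sa = m1 * (sa * ca - cb * sb)/D"
    using assms(1) by (simp add: field_simps)
  then show "((m0 * sa - m1 * sb)/D) * cb + ((m1 * ca - m0 * cb)/D) * sa = m1" using assms by simp
qed

lemma sq_le_quarter:
  fixes x :: real assumes "x^2 \<le> 1/16" "0 \<le> x" shows "x \<le> 1/4"
proof (rule ccontr)
  assume "\<not> x \<le> 1/4"
  then have "1/4 < x" by simp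
  then have "(1/4)*(1/4) < x*x" by (intro mult_strict_mono) auto
  then show False using assms(1) by (simp add: power2_eq_square)
qed

lemma cover7:
  fixes P :: "(real^2) set"
  assumes fin: "finite P" and ne: "P \<noteq> {}" and diam: "\<forall>p\<in>P. \<forall>q\<in>P. dist p q \<le> 1"
  shows "\<exists>z::nat \<Rightarrow> real^2. \<forall>p\<in>P. \<exists>i<7. dist (z i) p \<le> 1/4"
proof -
  define H where "H \<phi> = Max ((\<lambda>p. proj \<phi> p) ` P)" for \<phi>
  define L where "L \<phi> = Min ((\<lambda>p. proj \<phi> p) ` P)" for \<phi>
  define G where "G \<phi> = H \<phi> + L \<phi>" for \<phi>
  define F where "F \<theta> = G \<theta> - G (\<theta> + pi/3) + G (\<theta> + 2*pi/3)" for \<theta>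
  have finI: "finite ((\<lambda>p. proj \<phi> p) ` P)" for \<phi> using fin by simp
  have neI: "(\<lambda>p. proj \<phi> p) ` P \<noteq> {}" for \<phi> using ne by simp
  have HL_pi: "H (\<phi> + pi) = - L \<phi>" "L (\<phi> + pi) = - H \<phi>" for \<phi>
  proof -
    have e: "(\<lambda>p. proj (\<phi> + pi) p) ` P = uminus ` ((\<lambda>p. proj \<phi> p) ` P)"
      by (simp add: proj_pi image_image)
    show "H (\<phi> + pi) = - L \<phi>" unfolding H_def L_def e
      using minus_Min_eq_Max[OF finI neI] by simp
    show "L (\<phi> + pi) = - H \<phi>" unfolding H_def L_def e
      using minus_Max_eq_Min[OF finI neI] by simp
  qed
  have Gpi: "G (\<phi> + pi) = - G \<phi>" for \<phi> unfolding G_def HL_pi by simp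
  have Fsh: "F (\<theta> + pi/3) = - F \<theta>" for \<theta>
  proof -
    have e1: "\<theta> + pi/3 + pi/3 = \<theta> + 2*pi/3" by simp
    have e2: "\<theta> + pi/3 + 2*pi/3 = \<theta> + pi" by simp
    show ?thesis unfolding F_def e1 e2 Gpi by simp
  qed
  have contH: "continuous_on UNIV (\<lambda>\<theta>. H (\<theta> + a))" for a
    unfolding H_def proj_def
    by (rule continuous_on_Max_img[OF fin ne]) (intro continuous_intros)
  have contL: "continuous_on UNIV (\<lambda>\<theta>. L (\<theta> + a))" for a
    unfolding L_def proj_def
    by (rule continuous_on_Min_img[OF fin ne]) (intro continuous_intros)
  have contG: "continuous_on UNIV (\<lambda>\<theta>. G (\<theta> + a))" for a
    unfolding G_def using contH contL by (intro continuous_intros)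
  have contF: "continuous_on {0..pi/3} F"
  proof -
    have "continuous_on UNIV F"
      unfolding F_def using contG[of 0] contG[of "pi/3"] contG[of "2*pi/3"]
      by (intro continuous_intros) auto
    then show ?thesis by (rule continuous_on_subset) simp
  qed
  obtain \<theta> where F0: "F \<theta> = 0"
  proof (cases "F 0 \<le> 0")
    case True
    have "F (pi/3) \<ge> 0" using Fsh[of 0] True by simp
    then obtain x where "F x = 0" using IVT'[of F 0 0 "pi/3"] True contF by auto
    then show ?thesis using that by blast
  next
    case False
    have "F (pi/3) \<le> 0" using Fsh[of 0] False by simp
    then obtain x where "F x = 0" using IVT2'[of F "pi/3" 0 0] False contF by auto
    then show ?thesis using that by blast
  qed
  have HLb: "L \<phi> \<le> proj \<phi> p \<and> proj \<phi> p \<le> H \<phi>" if "p \<in> P" for \<phi> p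
    unfolding H_def L_def using that fin by auto
  have width: "H \<phi> - L \<phi> \<le> 1" for \<phi>
  proof -
    have "H \<phi> \<in> (\<lambda>p. proj \<phi> p) ` P" unfolding H_def by (rule Max_in[OF finI neI])
    then obtain p where p: "p \<in> P" "proj \<phi> p = H \<phi>" by force
    have "L \<phi> \<in> (\<lambda>p. proj \<phi> p) ` P" unfolding L_def by (rule Min_in[OF finI neI])
    then obtain q where q: "q \<in> P" "proj \<phi> q = L \<phi>" by force
    have "proj \<phi> p - proj \<phi> q \<le> 1" using proj_le_dist[of \<phi> p q] diam p(1) q(1) by force
    then show ?thesis using p q by simp
  qed
  have bnd: "\<bar>proj \<phi> p - G \<phi> / 2\<bar> \<le> 1/2" if "p \<in> P" for \<phi> p
    using HLb[OF that, of \<phi>] width[of \<phi>] unfolding G_def by (simp add: abs_le_iff field_simps)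
  define m0 where "m0 = G \<theta> / 2"
  define m1 where "m1 = G (\<theta> + pi/3) / 2"
  define m2 where "m2 = G (\<theta> + 2*pi/3) / 2"
  have m2e: "m2 = m1 - m0" using F0 unfolding F_def m0_def m1_def m2_def by simp
  define c :: "real^2" where "c = vector [(m0 * sin (\<theta> + pi/3) - m1 * sin \<theta>) / (sqrt 3 / 2),
                             (m1 * cos \<theta> - m0 * cos (\<theta> + pi/3)) / (sqrt 3 / 2)]"
  have key: "sin (\<theta> + pi/3) * cos \<theta> - cos (\<theta> + pi/3) * sin \<theta> = sqrt 3 / 2"
    using sin_diff[of "\<theta> + pi/3" \<theta>] by (simp add: sin_60)
  have s3pos: "sqrt 3 / 2 \<noteq> (0::real)" by simp
  have pc0: "proj \<theta> c = m0"
    unfolding c_def proj_def vector_2 by (rule cramer2(1)[OF s3pos key])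
  have pc1: "proj (\<theta> + pi/3) c = m1"
    unfolding c_def proj_def vector_2 by (rule cramer2(2)[OF s3pos key])
  have pc2: "proj (\<theta> + 2*pi/3) c = m2" using proj_2pi3[of \<theta> c] pc0 pc1 m2e by simp
  define z where "z i = [c, c + qv \<theta>, c + qv (\<theta> + pi/3), c + qv (\<theta> + 2*pi/3), c + qv (\<theta> + pi),
     c + qv (\<theta> + pi/3 + pi), c + qv (\<theta> + 2*pi/3 + pi)] ! i" for i :: nat
  have "\<forall>p\<in>P. \<exists>i<7. dist (z i) p \<le> 1/4"
  proof
    fix p assume pP: "p \<in> P"
    define y where "y = p - c"
    define X where "X = proj \<theta> y"
    define Y where "Y = proj (\<theta> + pi/3) y"
    have X: "X = proj \<theta> p - m0" unfolding X_def y_def proj_diff pc0 ..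
    have Y: "Y = proj (\<theta> + pi/3) p - m1" unfolding Y_def y_def proj_diff pc1 ..
    have Z: "proj (\<theta> + 2*pi/3) y = proj (\<theta> + 2*pi/3) p - m2" unfolding y_def proj_diff pc2 ..
    have bX: "\<bar>X\<bar> \<le> 1/2" unfolding X m0_def using bnd[OF pP] .
    have bY: "\<bar>Y\<bar> \<le> 1/2" unfolding Y m1_def using bnd[OF pP] .
    have YX: "proj (\<theta> + 2*pi/3) y = Y - X" unfolding X_def Y_def by (rule proj_2pi3)
    have bZ: "\<bar>Y - X\<bar> \<le> 1/2" unfolding YX[symmetric] Z m2_def using bnd[OF pP] .
    define N where "N = (norm y)^2"
    have N: "N = (4/3) * (X^2 - X*Y + Y^2)" unfolding N_def X_def Y_def by (rule norm_hex)
    have dq: "(dist (c + qv \<phi>) p)^2 = N - (proj \<phi> y + proj (\<phi> + pi/3) y)/2 + 3/16" for \<phi>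
    proof -
      have "dist (c + qv \<phi>) p = norm (y - qv \<phi>)"
        unfolding y_def by (simp add: dist_norm norm_minus_commute algebra_simps)
      then show ?thesis using norm_qv[of y \<phi>] unfolding N_def by simp
    qed
    have d0: "(dist (z 0) p)^2 = N" unfolding z_def N_def y_def by (simp add: dist_norm norm_minus_commute)
    have fin4: "dist (z i) p \<le> 1/4" if "(dist (z i) p)^2 \<le> 1/16" for i
      using sq_le_quarter[OF that zero_le_dist] .
    have k1: "\<theta> + pi/3 + pi/3 = \<theta> + 2*pi/3" by simp
    have k2: "\<theta> + 2*pi/3 + pi/3 = \<theta> + pi" by simp
    have k3: "\<theta> + pi + pi/3 = \<theta> + pi/3 + pi" by simp
    have k4: "\<theta> + pi/3 + pi + pi/3 = \<theta> + 2*pi/3 + pi" by simp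
    have k5: "\<theta> + 2*pi/3 + pi + pi/3 = \<theta> + pi + pi" by simp
    have Q: "proj \<theta> y = X" "proj (\<theta> + pi/3) y = Y" "proj (\<theta> + 2*pi/3) y = Y - X"
      "proj (\<theta> + pi) y = - X" "proj (\<theta> + pi/3 + pi) y = - Y" "proj (\<theta> + 2*pi/3 + pi) y = - (Y - X)"
      "proj (\<theta> + pi + pi) y = X"
      unfolding proj_pi using YX by (simp_all add: X_def Y_def)
    have e1: "(dist (z 1) p)^2 = N - (X + Y)/2 + 3/16" using dq[of \<theta>] Q by (simp add: z_def)
    have e2: "(dist (z 2) p)^2 = N - (Y + (Y - X))/2 + 3/16" using dq[of "\<theta> + pi/3", unfolded k1] Q by (simp add: z_def)
    have e3: "(dist (z 3) p)^2 = N - ((Y - X) + - X)/2 + 3/16" using dq[of "\<theta> + 2*pi/3", unfolded k2] Q by (simp add: z_def)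
    have e4: "(dist (z 4) p)^2 = N - (-X + -Y)/2 + 3/16" using dq[of "\<theta> + pi", unfolded k3] Q by (simp add: z_def)
    have e5: "(dist (z 5) p)^2 = N - (-Y + - (Y - X))/2 + 3/16" using dq[of "\<theta> + pi/3 + pi", unfolded k4] Q by (simp add: z_def)
    have e6: "(dist (z 6) p)^2 = N - (- (Y - X) + X)/2 + 3/16" using dq[of "\<theta> + 2*pi/3 + pi", unfolded k5] Q by (simp add: z_def)
    have "(dist (z 0) p)^2 \<le> 1/16 \<or> (dist (z 1) p)^2 \<le> 1/16 \<or> (dist (z 2) p)^2 \<le> 1/16
      \<or> (dist (z 3) p)^2 \<le> 1/16 \<or> (dist (z 4) p)^2 \<le> 1/16 \<or> (dist (z 5) p)^2 \<le> 1/16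
      \<or> (dist (z 6) p)^2 \<le> 1/16"
      using hex_cover[OF bX bY bZ N] d0 e1 e2 e3 e4 e5 e6 by argo
    then show "\<exists>i<7. dist (z i) p \<le> 1/4"
    proof (elim disjE)
      assume "(dist (z 0) p)^2 \<le> 1/16"
      then show ?thesis using fin4[of 0] by (intro exI[of _ 0]) auto
    next
      assume "(dist (z 1) p)^2 \<le> 1/16"
      then show ?thesis using fin4[of 1] by (intro exI[of _ 1]) auto
    next
      assume "(dist (z 2) p)^2 \<le> 1/16"
      then show ?thesis using fin4[of 2] by (intro exI[of _ 2]) auto
    next
      assume "(dist (z 3) p)^2 \<le> 1/16"
      then show ?thesis using fin4[of 3] by (intro exI[of _ 3]) auto
    next
      assume "(dist (z 4) p)^2 \<le> 1/16"
      then show ?thesis using fin4[of 4] by (intro exI[of _ 4]) auto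
    next
      assume "(dist (z 5) p)^2 \<le> 1/16"
      then show ?thesis using fin4[of 5] by (intro exI[of _ 5]) auto
    next
      assume "(dist (z 6) p)^2 \<le> 1/16"
      then show ?thesis using fin4[of 6] by (intro exI[of _ 6]) auto
    qed
  qed
  then show ?thesis by blast
qed

definition kap :: "nat \<Rightarrow> real" where "kap m = 1 - cos (pi / (3 * real m))"

lemma kap_bounds:
  assumes "1 \<le> m"
  shows "0 < kap m" "kap m \<le> 1/2"
proof -
  define x where "x = pi / (3 * real m)"
  have xpos: "0 < x" using assms by (simp add: x_def)
  have xle: "x \<le> pi/3" using assms unfolding x_def by (simp add: field_simps)
  have "cos x < cos 0" by (rule cos_monotone_0_pi) (use xpos xle in auto)
  then show "0 < kap m" by (simp add: kap_def x_def[symmetric])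
  have "cos (pi/3) \<le> cos x" by (rule cos_monotone_0_pi_le) (use xpos xle in auto)
  then show "kap m \<le> 1/2" by (simp add: kap_def x_def[symmetric] cos_60)
qed

lemma cos_cases:
  fixes m d :: nat
  assumes m: "1 \<le> m" and d: "d \<le> 3*m"
  defines "x \<equiv> pi / (3 * real m)"
  shows "1 \<le> d \<Longrightarrow> cos (real d * x) \<le> 1 - kap m"
    and "d = m \<Longrightarrow> cos (real d * x) = 1/2"
    and "m + 1 \<le> d \<Longrightarrow> cos (real d * x) \<le> (1 - kap m)/2"
    and "d = 3*m \<Longrightarrow> cos (real d * x) = -1"
    and "d + 1 \<le> 3*m \<Longrightarrow> - (1 - kap m) \<le> cos (real d * x)"
proof -
  have xpos: "0 < x" using m by (simp add: x_def)
  have mx: "real m * x = pi/3" using m by (simp add: x_def field_simps)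
  have xle: "x \<le> pi/3"
  proof -
    have "1 * x \<le> real m * x" using m xpos by (intro mult_right_mono) auto
    then show ?thesis using mx by simp
  qed
  have dpi: "real d * x \<le> pi"
  proof -
    have "real d * x \<le> real (3*m) * x" using d xpos by (intro mult_right_mono) auto
    also have "\<dots> = pi" using mx by simp
    finally show ?thesis .
  qed
  have kx: "kap m = 1 - cos x" by (simp add: kap_def x_def)
  show "1 \<le> d \<Longrightarrow> cos (real d * x) \<le> 1 - kap m"
  proof -
    assume "1 \<le> d"
    then have "x \<le> real d * x" using xpos by simp
    then have "cos (real d * x) \<le> cos x" using xpos dpi by (intro cos_monotone_0_pi_le) auto
    then show ?thesis by (simp add: kx)
  qed
  show "d = m \<Longrightarrow> cos (real d * x) = 1/2"
  proof -
    assume "d = m"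
    then have "real d * x = pi/3" using mx by simp
    then show ?thesis by (simp only: cos_60)
  qed
  show "m + 1 \<le> d \<Longrightarrow> cos (real d * x) \<le> (1 - kap m)/2"
  proof -
    assume h: "m + 1 \<le> d"
    have "real (m+1) * x \<le> real d * x" using h xpos by (intro mult_right_mono) auto
    then have "cos (real d * x) \<le> cos (real (m+1) * x)"
      using xpos dpi by (intro cos_monotone_0_pi_le) auto
    also have "real (m+1) * x = pi/3 + x" using mx by (simp add: algebra_simps)
    also have "cos (pi/3 + x) = cos x / 2 - sqrt 3 / 2 * sin x" by (simp add: cos_add cos_60 sin_60)
    also have "\<dots> \<le> cos x / 2"
    proof -
      have "x \<le> pi" using xle pi_gt_zero by linarith
      then have "0 \<le> sin x" using xpos by (intro sin_ge_zero) auto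
      then show ?thesis by simp
    qed
    finally show ?thesis by (simp add: kx)
  qed
  show "d = 3*m \<Longrightarrow> cos (real d * x) = -1"
  proof -
    assume "d = 3*m"
    then have "real d * x = pi" using mx by simp
    then show ?thesis by simp
  qed
  show "d + 1 \<le> 3*m \<Longrightarrow> - (1 - kap m) \<le> cos (real d * x)"
  proof -
    assume h: "d + 1 \<le> 3*m"
    have e: "real (3*m - 1) * x = pi - x" using m mx by (simp add: of_nat_diff algebra_simps)
    have hd: "real d \<le> real (3*m - 1)" using h by simp
    have B: "real d * x \<le> real (3*m - 1) * x" by (rule mult_right_mono[OF hd]) (use xpos in simp)
    have A: "0 \<le> real d * x" using xpos by simp
    have C: "real (3*m - 1) * x \<le> pi" using e xpos by simp
    have "cos (real (3*m - 1) * x) \<le> cos (real d * x)" by (rule cos_monotone_0_pi_le[OF A B C])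
    then show ?thesis unfolding e by (simp add: kx)
  qed
qed

definition dl :: "nat \<Rightarrow> real" where "dl m = kap m / 100"
definition bt :: "nat \<Rightarrow> real" where "bt m = (dl m)^2 / 4"
definition rr :: "nat \<Rightarrow> nat \<Rightarrow> real" where "rr m j = 1/2 + (-1)^(j div m) * bt m"
definition ang :: "nat \<Rightarrow> nat \<Rightarrow> real" where "ang m j = real j * (pi / (3 * real m))"
definition ringp :: "nat \<Rightarrow> nat \<Rightarrow> real^2" where
  "ringp m j = vector [rr m j * cos (ang m j), rr m j * sin (ang m j)]"
definition dcy :: "nat \<Rightarrow> nat \<Rightarrow> nat \<Rightarrow> nat" where
  "dcy m j k = (let t = (if k \<le> j then j - k else k - j) in min t (6*m - t))"

lemma dcy_sym: "dcy m j k = dcy m k j"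
  unfolding dcy_def Let_def by auto

lemma dcy_le: "dcy m j k \<le> 3*m"
  unfolding dcy_def Let_def by auto

lemma dcy_zero: "j < 6*m \<Longrightarrow> k < 6*m \<Longrightarrow> dcy m j k = 0 \<Longrightarrow> j = k"
  unfolding dcy_def Let_def by (auto split: if_splits)

lemma cos_ang:
  assumes "1 \<le> m" "j < 6*m" "k < 6*m"
  shows "cos (ang m j - ang m k) = cos (real (dcy m j k) * (pi / (3 * real m)))"
proof -
  define x where "x = pi / (3 * real m)"
  define t where "t = (if k \<le> j then j - k else k - j)"
  have t6: "t < 6*m" using assms unfolding t_def by auto
  have ad: "ang m j - ang m k = (real j - real k) * x" unfolding ang_def x_def by (simp only: left_diff_distrib)
  have c1: "cos (ang m j - ang m k) = cos (real t * x)"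
  proof (cases "k \<le> j")
    case True
    then have "real t = real j - real k" unfolding t_def by (simp add: of_nat_diff)
    then show ?thesis using ad by simp
  next
    case False
    then have "real t = - (real j - real k)" unfolding t_def by (simp add: of_nat_diff)
    then have "real t * x = - ((real j - real k) * x)" by (simp only: mult_minus_left)
    then show ?thesis using ad by (metis cos_minus)
  qed
  show ?thesis
  proof (cases "t \<le> 3*m")
    case True
    then have "dcy m j k = t" unfolding dcy_def t_def[symmetric] Let_def by simp
    then show ?thesis using c1 by (simp add: x_def)
  next
    case False
    then have d: "dcy m j k = 6*m - t" unfolding dcy_def t_def[symmetric] Let_def by simp
    have "real (6*m) * x = 2 * pi" using assms(1) by (simp add: x_def field_simps)
    then have "real t * x = 2*pi - real (6*m - t) * x" using t6 by (simp add: of_nat_diff algebra_simps)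
    then have "cos (real t * x) = cos (real (6*m - t) * x)" by simp
    then show ?thesis using c1 d by (simp add: x_def)
  qed
qed

lemma ring_dist2:
  "(dist (ringp m j) (ringp m k))^2 = (rr m j)^2 + (rr m k)^2 - 2 * rr m j * rr m k * cos (ang m j - ang m k)"
  unfolding dist2sq ringp_def vector_2 cos_diff
  by (simp add: power2_eq_square algebra_simps sc')

lemma norm_ringp: assumes "0 \<le> rr m j" shows "norm (ringp m j) = rr m j"
proof -
  have "(norm (ringp m j))^2 = (rr m j)^2"
    unfolding norm2sq ringp_def vector_2 by (simp add: power2_eq_square algebra_simps sc')
  then show ?thesis using assms by (simp add: power2_eq_iff_nonneg)
qed

lemma sign_opp:
  assumes m: "1 \<le> m" and j: "j < 6*m" and k: "k < 6*m" and d: "dcy m j k = m \<or> dcy m j k = 3*m"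
  shows "(-1::real)^(j div m) = - ((-1)^(k div m))"
proof -
  have main: "(-1::real)^(j div m) = - ((-1)^(k div m))"
    if kj: "k \<le> j" and j: "j < 6*m" and dd: "dcy m j k = m \<or> dcy m j k = 3*m" for j k
  proof -
    have "j - k = m \<or> j - k = 5*m \<or> j - k = 3*m"
      using kj dd j unfolding dcy_def Let_def by (auto simp: min_def split: if_splits)
    then obtain a where a: "j = k + a*m" "odd a"
      using kj by (metis add_diff_inverse_nat not_le odd_numeral nat_mult_1 odd_one diff_le_self le_antisym mult.commute)
    have "j div m = k div m + a" using a(1) m by simp
    then show ?thesis using a(2) by (simp add: power_add)
  qed
  show ?thesis
  proof (cases "k \<le> j")
    case True show ?thesis by (rule main[OF True j d])
  next
    case False
    then have "j \<le> k" by simp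
    from main[OF this k] d dcy_sym[of m j k] have "(-1::real)^(k div m) = - ((-1)^(j div m))" by simp
    then show ?thesis by simp
  qed
qed

lemma prod_lb:
  fixes r1 r2 b :: real
  assumes "0 \<le> b" "b \<le> 1/1000" "\<bar>r1 - 1/2\<bar> \<le> b" "\<bar>r2 - 1/2\<bar> \<le> b"
  shows "1/4 - b \<le> r1*r2"
proof -
  have "(1/2 - b)*(1/2 - b) \<le> r1*r2" using assms by (intro mult_mono) auto
  moreover have "(1/2 - b)*(1/2 - b) = 1/4 - b + b*b" by (simp add: algebra_simps)
  moreover have "0 \<le> b*b" by simp
  ultimately show ?thesis by linarith
qed

lemma two_prod: "2*r1*r2 \<le> r1^2 + (r2::real)^2"
proof -
  have "0 \<le> (r1 - r2)^2" by simp
  moreover have "(r1-r2)^2 = r1^2 - 2*r1*r2 + r2^2" by (simp add: power2_eq_square algebra_simps)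
  ultimately show ?thesis by linarith
qed

lemma R1:
  fixes r1 r2 C k b :: real
  assumes "0 < k" "0 \<le> b" "b \<le> 1/1000" "\<bar>r1 - 1/2\<bar> \<le> b" "\<bar>r2 - 1/2\<bar> \<le> b" "C \<le> 1 - k"
  shows "k/4 \<le> r1^2 + r2^2 - 2*r1*r2*C"
proof -
  have p: "1/8 \<le> r1*r2" using prod_lb[OF assms(2-5)] assms(3) by linarith
  have a: "(r1*r2)*k \<le> (r1*r2)*(1 - C)" using p assms by (intro mult_left_mono) auto
  have b: "(1/8)*k \<le> (r1*r2)*k" using p assms by (intro mult_right_mono) auto
  have "2*r1*r2 \<le> r1^2 + r2^2" by (rule two_prod)
  then show ?thesis using a b by (simp add: algebra_simps)
qed

lemma R2:
  fixes r1 r2 :: real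
  assumes "r1 + r2 = 1" "r1 \<noteq> r2"
  shows "1/4 < r1^2 + r2^2 - 2*r1*r2*(1/2)"
proof -
  have r2: "r2 = 1 - r1" using assms by simp
  have "r1^2 + r2^2 - 2*r1*r2*(1/2) = 3*(r1 - 1/2)^2 + 1/4" unfolding r2 by (simp add: power2_eq_square algebra_simps)
  moreover have "r1 - 1/2 \<noteq> 0" using assms by simp
  then have "0 < (r1 - 1/2)^2" by simp
  ultimately show ?thesis by simp
qed

lemma R3:
  fixes r1 r2 C k b :: real
  assumes "0 < k" "k \<le> 1/2" "0 \<le> b" "b \<le> k/16" "b \<le> 1/1000" "\<bar>r1 - 1/2\<bar> \<le> b" "\<bar>r2 - 1/2\<bar> \<le> b" "C \<le> (1 - k)/2"
  shows "1/4 < r1^2 + r2^2 - 2*r1*r2*C"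
proof -
  have p: "1/4 - b \<le> r1*r2" using prod_lb[OF assms(3) assms(5-7)] .
  have p0: "0 \<le> r1*r2" using p assms by linarith
  have a: "(r1*r2)*(2*C) \<le> (r1*r2)*(1 - k)" using p0 assms by (intro mult_left_mono) auto
  have b: "(1/4 - b)*(1+k) \<le> (r1*r2)*(1+k)" using p assms by (intro mult_right_mono) auto
  have c: "b*k \<le> b*(1/2)" using assms by (intro mult_left_mono) auto
  have "2*r1*r2 \<le> r1^2 + r2^2" by (rule two_prod)
  then show ?thesis using a b c assms by (simp add: algebra_simps)
qed

lemma R4:
  fixes r1 r2 :: real
  assumes "r1 + r2 = 1"
  shows "r1^2 + r2^2 - 2*r1*r2*(-1) = 1"
proof -
  have "r1^2 + r2^2 - 2*r1*r2*(-1) = (r1 + r2)^2" by (simp add: power2_eq_square algebra_simps)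
  then show ?thesis using assms by simp
qed

lemma R5:
  fixes r1 r2 C k b :: real
  assumes "0 < k" "0 \<le> b" "b \<le> k/20" "b \<le> 1/1000" "\<bar>r1 - 1/2\<bar> \<le> b" "\<bar>r2 - 1/2\<bar> \<le> b" "- (1 - k) \<le> C"
  shows "r1^2 + r2^2 - 2*r1*r2*C \<le> 1"
proof -
  have p: "1/4 - b \<le> r1*r2" using prod_lb[OF assms(2) assms(4-6)] .
  have p0: "0 \<le> r1*r2" using p assms by linarith
  have a: "(r1*r2)*(- C) \<le> (r1*r2)*(1 - k)" using p0 assms by (intro mult_left_mono) auto
  have s: "r1 + r2 \<le> 1 + 2*b" using assms by linarith
  have s0: "0 \<le> r1 + r2" using assms by linarith
  have sq: "(r1 + r2)^2 \<le> (1 + 2*b)^2" using s s0 by (intro power_mono) auto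
  have e: "r1^2 + r2^2 = (r1+r2)^2 - 2*r1*r2" by (simp add: power2_eq_square algebra_simps)
  have bb: "b*b \<le> b*(1/1000)" using assms by (intro mult_left_mono) auto
  have kp: "(1/8)*k \<le> (r1*r2)*k" by (rule mult_right_mono) (use p assms in auto)
  have a': "- (r1*r2*C) \<le> r1*r2 - r1*r2*k" using a by (simp add: algebra_simps)
  have ge: "r1^2 + r2^2 - 2*r1*r2*C = (r1+r2)^2 - 2*(r1*r2) - 2*(r1*r2*C)"
    by (simp add: power2_eq_square algebra_simps)
  have sq': "(r1+r2)^2 \<le> 1 + 4*b + 4*(b*b)" using sq by (simp add: power2_eq_square algebra_simps)
  show ?thesis unfolding ge using a' sq' bb kp assms(1,3) by linarith
qed


lemma params:
  assumes "1 \<le> m"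
  shows "0 < kap m" "kap m \<le> 1/2" "0 < dl m" "dl m \<le> 1/200" "0 < bt m"
    "bt m \<le> 1/1000" "bt m \<le> kap m / 80000"
proof -
  note k = kap_bounds[OF assms]
  show "0 < kap m" "kap m \<le> 1/2" by (rule k(1), rule k(2))
  show "0 < dl m" "dl m \<le> 1/200" using k by (simp_all add: dl_def)
  show "0 < bt m" using k by (simp add: bt_def dl_def)
  have "bt m = kap m * kap m / 40000" by (simp add: bt_def dl_def power2_eq_square)
  moreover have "kap m * kap m \<le> kap m * (1/2)" using k by (intro mult_left_mono) auto
  ultimately show "bt m \<le> kap m / 80000" by simp
  then show "bt m \<le> 1/1000" using k by simp
qed

lemma rr_bnd: "\<bar>rr m j - 1/2\<bar> \<le> bt m" if "0 \<le> bt m"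
  using that by (simp add: rr_def abs_mult)

lemma ring_facts:
  assumes m: "1 \<le> m" and j: "j < 6*m" and k: "k < 6*m"
  shows "j \<noteq> k \<Longrightarrow> kap m / 4 \<le> (dist (ringp m j) (ringp m k))^2"
    and "m \<le> dcy m j k \<Longrightarrow> 1/4 < (dist (ringp m j) (ringp m k))^2"
    and "dist (ringp m j) (ringp m k) \<le> 1"
proof -
  note pr = params[OF m]
  define d where "d = dcy m j k"
  define C where "C = cos (real d * (pi / (3 * real m)))"
  have d3: "d \<le> 3*m" unfolding d_def by (rule dcy_le)
  have D: "(dist (ringp m j) (ringp m k))^2 = (rr m j)^2 + (rr m k)^2 - 2 * rr m j * rr m k * C"
    unfolding ring_dist2 cos_ang[OF m j k] C_def d_def ..
  note cc = cos_cases[OF m d3, folded C_def]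
  have rj: "\<bar>rr m j - 1/2\<bar> \<le> bt m" and rk: "\<bar>rr m k - 1/2\<bar> \<le> bt m"
    using rr_bnd pr(5) by auto
  have opp: "rr m j + rr m k = 1 \<and> rr m j \<noteq> rr m k" if "d = m \<or> d = 3*m"
  proof -
    have s: "(-1::real)^(j div m) = - ((-1)^(k div m))"
      using sign_opp[OF m j k] that unfolding d_def by auto
    have "(-1::real)^(k div m) = 1 \<or> (-1::real)^(k div m) = -1" by (simp add: minus_one_power_iff)
    then show ?thesis using s pr(5) unfolding rr_def by auto
  qed
  show "j \<noteq> k \<Longrightarrow> kap m / 4 \<le> (dist (ringp m j) (ringp m k))^2"
  proof -
    assume "j \<noteq> k"
    then have "d \<noteq> 0" using dcy_zero[OF j k] unfolding d_def by auto
    then have "C \<le> 1 - kap m" using cc(1) by simp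
    then show ?thesis unfolding D using R1[OF pr(1) less_imp_le[OF pr(5)] pr(6) rj rk] by simp
  qed
  show "m \<le> dcy m j k \<Longrightarrow> 1/4 < (dist (ringp m j) (ringp m k))^2"
  proof -
    assume "m \<le> dcy m j k"
    then have "d = m \<or> m + 1 \<le> d" unfolding d_def by auto
    then show ?thesis
    proof
      assume dm: "d = m"
      have C2: "C = 1/2" using cc(2) dm by simp
      show ?thesis unfolding D C2 by (rule R2) (use opp dm in auto)
    next
      assume "m + 1 \<le> d"
      then have "C \<le> (1 - kap m)/2" using cc(3) by simp
      moreover have "bt m \<le> kap m / 16" using pr by simp
      ultimately show ?thesis unfolding D
        using R3[OF pr(1) pr(2) less_imp_le[OF pr(5)] _ pr(6) rj rk] by simp
    qed
  qed
  have "(dist (ringp m j) (ringp m k))^2 \<le> 1"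
  proof (cases "d = 3*m")
    case True
    have C1: "C = -1" using cc(4) True by simp
    have "(rr m j)^2 + (rr m k)^2 - 2 * rr m j * rr m k * C = 1" unfolding C1 by (rule R4) (use opp True in auto)
    then show ?thesis unfolding D by simp
  next
    case False
    then have "d + 1 \<le> 3*m" using d3 by simp
    then have "- (1 - kap m) \<le> C" using cc(5) by simp
    moreover have "bt m \<le> kap m / 20" using pr by simp
    ultimately show ?thesis unfolding D
      using R5[OF pr(1) less_imp_le[OF pr(5)] _ pr(6) rj rk] by simp
  qed
  then show "dist (ringp m j) (ringp m k) \<le> 1"
    by (metis abs_le_square_iff abs_of_nonneg zero_le_dist power_one abs_one)
qed

lemma lune_real:
  fixes t ip u dd b :: real
  assumes A: "(1/2-b)^2 \<le> t^2 + 2*ip + u" and u0: "0 \<le> u" and u1: "u \<le> 1/16"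
    and t0: "1/4 - b \<le> t" and t1: "t \<le> 1/4 + dd"
    and d0: "0 \<le> dd" "dd \<le> 1/100" and b0: "0 \<le> b" "b \<le> 1/100"
  shows "u - ip/(2*t) + 1/16 \<le> 2*(dd + b + dd^2)"
proof -
  have tp: "0 < t" using t0 b0 by linarith
  define E where "E = 2*(dd + b + dd^2)"
  have E0: "0 \<le> E" using d0 b0 by (simp add: E_def)
  have eq: "u - ip/(2*t) + 1/16 = (4*t*u - 2*ip + t/4)/(4*t)"
    using tp by (simp add: field_simps)
  have K: "(1/2-b)^2 = 1/4 - b + b*b" by (simp add: power2_eq_square algebra_simps)
  have bb: "0 \<le> b*b" by simp
  have tu: "t*u \<le> t*(1/16)" using tp u1 by (intro mult_left_mono) auto
  have tt: "t*t \<le> (1/4 + dd)*(1/4 + dd)" using tp t1 by (intro mult_mono) auto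
  have tE: "(1/4 - b)*E \<le> t*E" using t0 E0 by (intro mult_right_mono) auto
  have t2: "t^2 = t*t" by (simp add: power2_eq_square)
  have dd2: "dd^2 = dd*dd" by (simp add: power2_eq_square)
  have bE: "b*E \<le> (1/100)*E" using b0 E0 by (intro mult_right_mono) auto
  have num: "4*t*u - 2*ip + t/4 \<le> E*(4*t)"
  proof -
    define TE where "TE = t*E"
    define BE where "BE = b*E"
    have A': "1/4 - b + b*b \<le> t*t + 2*ip + u" using A K t2 by simp
    have tu': "t*u \<le> t/16" using tu by simp
    have tt': "t*t \<le> 1/16 + dd/2 + dd*dd" using tt by (simp add: algebra_simps)
    have tE': "E/4 - BE \<le> TE" using tE unfolding TE_def BE_def by (simp add: algebra_simps)
    have bE': "BE \<le> E/100" using bE unfolding BE_def by simp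
    have R: "E*(4*t) = 4*TE" unfolding TE_def by simp
    have Ee: "E = 2*dd + 2*b + 2*(dd*dd)" unfolding E_def dd2 by simp
    have L: "4*t*u = 4*(t*u)" by simp
    have ddp: "0 \<le> dd*dd" by simp
    show ?thesis unfolding R L using A' tu' tt' tE' bE' Ee bb ddp u1 t1 d0 b0 by linarith
  qed
  show ?thesis unfolding eq E_def[symmetric] using num tp by (simp add: divide_le_eq)
qed

lemma lune1:
  fixes z p :: "real^2"
  assumes zp: "dist z p \<le> 1/4" and pn: "1/2 - b \<le> norm p"
    and t0: "1/4 - b \<le> norm z" and t1: "norm z \<le> 1/4 + dd"
    and d0: "0 \<le> dd" "dd \<le> 1/100" and b0: "0 \<le> b" "b \<le> 1/100"
  shows "(norm (p - z - (1/(4*norm z)) *\<^sub>R z))^2 \<le> 2*(dd + b + dd^2)"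
proof -
  define t where "t = norm z"
  define y where "y = p - z"
  have tp: "0 < t" using t0 b0 unfolding t_def by linarith
  have u1: "(norm y)^2 \<le> 1/16"
  proof -
    have ny: "norm y \<le> 1/4" using zp by (simp add: y_def dist_norm norm_minus_commute)
    have "(norm y)^2 \<le> (1/4)^2" by (rule power_mono[OF ny norm_ge_zero])
    then show ?thesis by (simp add: power2_eq_square)
  qed
  have A0: "(norm p)^2 = t^2 + 2 * inner y z + (norm y)^2"
  proof -
    have "p = z + y" by (simp add: y_def)
    then have "(norm p)^2 = inner (z + y) (z + y)" by (simp add: power2_norm_eq_inner)
    also have "\<dots> = t^2 + 2 * inner y z + (norm y)^2"
      by (simp add: inner_add_left inner_add_right inner_commute power2_norm_eq_inner t_def)
    finally show ?thesis .
  qed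
  have A: "(1/2 - b)^2 \<le> t^2 + 2 * inner y z + (norm y)^2"
  proof -
    have "0 \<le> 1/2 - b" using b0 by simp
    then have "(1/2 - b)^2 \<le> (norm p)^2" using pn by (intro power_mono) auto
    then show ?thesis using A0 by simp
  qed
  have B: "(norm (y - (1/(4*t)) *\<^sub>R z))^2 = (norm y)^2 - inner y z/(2*t) + 1/16"
  proof -
    have "(norm (y - (1/(4*t)) *\<^sub>R z))^2 = inner (y - (1/(4*t)) *\<^sub>R z) (y - (1/(4*t)) *\<^sub>R z)"
      by (simp add: power2_norm_eq_inner)
    also have "\<dots> = inner y y - 2 * (1/(4*t)) * inner y z + (1/(4*t))^2 * inner z z"
      by (simp add: inner_diff_left inner_diff_right inner_commute power2_eq_square algebra_simps)
    also have "\<dots> = (norm y)^2 - 2 * (1/(4*t)) * inner y z + (1/(4*t))^2 * t^2"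
      by (simp add: power2_norm_eq_inner t_def)
    also have "\<dots> = (norm y)^2 - inner y z/(2*t) + 1/16"
      using tp by (simp add: power2_eq_square field_simps)
    finally show ?thesis .
  qed
  have "(norm y)^2 - inner y z/(2*t) + 1/16 \<le> 2*(dd + b + dd^2)"
    by (rule lune_real[OF A _ u1]) (use t0 t1 d0 b0 in \<open>simp_all add: t_def\<close>)
  then show ?thesis using B by (simp add: y_def t_def)
qed

lemma lune2:
  fixes z c p q :: "real^2"
  assumes zc: "dist z c \<le> 1/4" and cn: "norm c \<le> dd" and zp: "dist z p \<le> 1/4" and zq: "dist z q \<le> 1/4"
    and pn: "1/2 - b \<le> norm p" and qn: "1/2 - b \<le> norm q"
    and d0: "0 \<le> dd" "dd \<le> 1/100" and b0: "0 \<le> b" "b \<le> 1/100"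
  shows "(dist p q)^2 \<le> 8*(dd + b + dd^2)"
proof -
  have t0: "1/4 - b \<le> norm z"
  proof -
    have "norm p \<le> norm z + norm (p - z)" by (metis norm_triangle_sub)
    then show ?thesis using zp pn by (simp add: dist_norm norm_minus_commute)
  qed
  have t1: "norm z \<le> 1/4 + dd"
  proof -
    have "norm z \<le> norm c + norm (z - c)" by (metis norm_triangle_sub)
    then show ?thesis using zc cn by (simp add: dist_norm)
  qed
  define v where "v = (1/(4*norm z)) *\<^sub>R z"
  define a where "a = p - z - v"
  define a' where "a' = q - z - v"
  have ha: "(norm a)^2 \<le> 2*(dd + b + dd^2)" unfolding a_def v_def by (rule lune1[OF zp pn t0 t1 d0 b0])
  have ha': "(norm a')^2 \<le> 2*(dd + b + dd^2)" unfolding a'_def v_def by (rule lune1[OF zq qn t0 t1 d0 b0])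
  have "dist p q = norm (a - a')" by (simp add: a_def a'_def dist_norm)
  also have "\<dots> \<le> norm a + norm a'" by (rule norm_triangle_ineq4)
  finally have "dist p q \<le> norm a + norm a'" .
  then have "(dist p q)^2 \<le> (norm a + norm a')^2" by (intro power_mono) auto
  also have "\<dots> \<le> 2*((norm a)^2 + (norm a')^2)"
  proof -
    have "0 \<le> (norm a - norm a')^2" by simp
    then show ?thesis by (simp add: power2_eq_square algebra_simps)
  qed
  finally show ?thesis using ha ha' by simp
qed

definition cenp :: "nat \<Rightarrow> nat \<Rightarrow> real^2" where
  "cenp m i = vector [dl m * (2 * real i / (real m - 1) - 1), 0]"

lemma norm_vec_x0: "norm (vector [a, 0] :: real^2) = \<bar>a\<bar>"
proof -
  have "(norm (vector [a, 0] :: real^2))^2 = a^2" by (simp add: norm2sq)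
  then show ?thesis by (metis abs_norm_cancel real_sqrt_abs power2_abs real_sqrt_unique norm_ge_zero)
qed

lemma cen_norm:
  assumes "2 \<le> m" "i < m"
  shows "norm (cenp m i) \<le> dl m"
proof -
  have m1: "0 < real m - 1" using assms by simp
  have "real i \<le> real m - 1" using assms by linarith
  then have "2 * real i / (real m - 1) \<le> 2" using m1 by (simp add: divide_le_eq)
  moreover have "0 \<le> 2 * real i / (real m - 1)" using m1 by simp
  ultimately have "\<bar>2 * real i / (real m - 1) - 1\<bar> \<le> 1" by simp
  moreover have "0 \<le> dl m" using params(3)[of m] assms by simp
  ultimately have "\<bar>dl m * (2 * real i / (real m - 1) - 1)\<bar> \<le> dl m"
    by (simp add: abs_mult mult_left_le)
  then show ?thesis unfolding cenp_def norm_vec_x0 .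
qed

lemma cen_inj:
  assumes "2 \<le> m" shows "inj_on (cenp m) {..<m}"
proof
  fix i k assume "i \<in> {..<m}" "k \<in> {..<m}" "cenp m i = cenp m k"
  then have "dl m * (2 * real i / (real m - 1) - 1) = dl m * (2 * real k / (real m - 1) - 1)"
    unfolding cenp_def by (metis vector_2(1))
  moreover have "0 < dl m" using params(3)[of m] assms by simp
  moreover have "0 < real m - 1" using assms by simp
  ultimately show "i = k" by (simp add: field_simps)
qed

lemma cen_ends:
  assumes "2 \<le> m"
  shows "cenp m 0 = vector [- dl m, 0]" "cenp m (m - 1) = vector [dl m, 0]"
proof -
  show "cenp m 0 = vector [- dl m, 0]" by (simp add: cenp_def)
  have r: "real (m - 1) = real m - 1" using assms by (simp add: of_nat_diff)
  have ne: "real m - 1 \<noteq> 0" using assms by simp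
  have "2 * real (m - 1) / (real m - 1) = 2" unfolding r by (rule nonzero_mult_div_cancel_right[OF ne])
  then have e: "2 * real (m - 1) / (real m - 1) - 1 = 1" by argo
  show "cenp m (m - 1) = vector [dl m, 0]" unfolding cenp_def e by simp
qed

lemma cen_far:
  fixes p :: "real^2"
  assumes m: "2 \<le> m" and pn: "1/2 - bt m \<le> norm p"
  shows "1/2 < dist p (cenp m 0) \<or> 1/2 < dist p (cenp m (m - 1))"
proof -
  have m1: "1 \<le> m" using m by simp
  note pr = params[OF m1]
  define d where "d = dl m"
  have btd: "bt m = d^2/4" by (simp add: bt_def d_def)
  have np: "(1/2 - bt m)^2 \<le> (p$1)^2 + (p$2)^2"
  proof -
    have "(1/2 - bt m)^2 \<le> (norm p)^2" using pn pr by (intro power_mono) auto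
    then show ?thesis by (simp add: norm2sq)
  qed
  have K: "(1/2 - bt m)^2 = 1/4 - bt m + (bt m)^2" by (simp add: power2_eq_square algebra_simps)
  have dpos: "0 < d" using pr by (simp add: d_def)
  have d2: "0 < d^2" using dpos by simp
  have b2: "0 \<le> (bt m)^2" by simp
  have key: "1/4 < (p$1)^2 + (p$2)^2 + d^2" using np K btd d2 b2 by linarith
  have gt: "1/2 < x" if "1/4 < x^2" "0 \<le> x" for x :: real
  proof (rule ccontr)
    assume "\<not> 1/2 < x"
    then have "x^2 \<le> (1/2)^2" using that by (intro power_mono) auto
    then show False using that by (simp add: power2_eq_square)
  qed
  show ?thesis
  proof (cases "0 \<le> p$1")
    case True
    have "(dist p (cenp m 0))^2 = (p$1 + d)^2 + (p$2)^2"
      unfolding dist2sq cen_ends[OF m] by (simp add: d_def)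
    also have "\<dots> = (p$1)^2 + (p$2)^2 + d^2 + 2*d*(p$1)" by (simp add: power2_eq_square algebra_simps)
    finally have "(dist p (cenp m 0))^2 = (p$1)^2 + (p$2)^2 + d^2 + 2*d*(p$1)" .
    moreover have "0 \<le> 2*d*(p$1)" using True dpos by simp
    ultimately have "1/4 < (dist p (cenp m 0))^2" using key by linarith
    then show ?thesis using gt by simp
  next
    case False
    have "(dist p (cenp m (m-1)))^2 = (p$1 - d)^2 + (p$2)^2"
      unfolding dist2sq cen_ends[OF m] by (simp add: d_def)
    also have "\<dots> = (p$1)^2 + (p$2)^2 + d^2 - 2*d*(p$1)" by (simp add: power2_eq_square algebra_simps)
    finally have "(dist p (cenp m (m-1)))^2 = (p$1)^2 + (p$2)^2 + d^2 - 2*d*(p$1)" .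
    moreover have "2*d*(p$1) \<le> 0" using False dpos by (simp add: mult_nonneg_nonpos)
    ultimately have "1/4 < (dist p (cenp m (m-1)))^2" using key by linarith
    then show ?thesis using gt by simp
  qed
qed

lemma comb:
  assumes sub6: "J \<subseteq> {..<6*m}" and cl0: "\<forall>j\<in>J. \<forall>k\<in>J. dcy m j k < m"
  shows "card J \<le> m"
proof (cases "J = {}")
  case True then show ?thesis by simp
next
  case False
  have fin: "finite J" using sub6 finite_subset by blast
  define j0 where "j0 = Min J"
  have j0J: "j0 \<in> J" and j0le: "\<forall>k\<in>J. j0 \<le> k" using fin False by (auto simp: j0_def)
  have cl: "k < j0 + m \<or> j0 + 5*m < k" if "k \<in> J" for k
  proof -
    have "dcy m k j0 < m" using cl0 that j0J by blast
    moreover have "k < 6*m" "j0 \<le> k" using sub6 that j0le by auto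
    ultimately show ?thesis unfolding dcy_def Let_def by (auto simp: min_def split: if_splits)
  qed
  show ?thesis
  proof (cases "\<exists>k\<in>J. j0 + 5*m < k")
    case False
    then have "J \<subseteq> {j0..<j0+m}" using cl j0le by force
    then have "card J \<le> card {j0..<j0+m}" by (intro card_mono) auto
    then show ?thesis by simp
  next
    case True
    define J2 where "J2 = {k\<in>J. j0 + 5*m < k}"
    define k2 where "k2 = Min J2"
    have "J2 \<noteq> {}" "finite J2" using True fin by (auto simp: J2_def)
    then have k2J: "k2 \<in> J2" and k2le: "\<forall>k\<in>J2. k2 \<le> k" by (auto simp: k2_def)
    have k2b: "j0 + 5*m < k2" "k2 < 6*m" "k2 \<in> J" using k2J sub6 by (auto simp: J2_def)
    have sub: "J \<subseteq> {j0..<k2 - 5*m} \<union> {k2..<6*m}"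
    proof
      fix k assume kJ: "k \<in> J"
      show "k \<in> {j0..<k2 - 5*m} \<union> {k2..<6*m}"
      proof (cases "j0 + 5*m < k")
        case True
        then have "k2 \<le> k" using k2le kJ by (auto simp: J2_def)
        then show ?thesis using kJ sub6 by auto
      next
        case False
        then have kl: "k < j0 + m" using cl[OF kJ] by simp
        have "dcy m k2 k < m" using cl0 kJ k2b(3) by blast
        then have "k + 5*m < k2" using kl k2b unfolding dcy_def Let_def
          by (auto simp: min_def split: if_splits)
        then show ?thesis using j0le kJ by auto
      qed
    qed
    have "card J \<le> card ({j0..<k2 - 5*m} \<union> {k2..<6*m})" by (rule card_mono) (use sub in auto)
    also have "\<dots> \<le> card {j0..<k2-5*m} + card {k2..<6*m}" by (rule card_Un_le)
    also have "\<dots> = (k2 - 5*m - j0) + (6*m - k2)" by simp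
    also have "\<dots> \<le> m" using k2b by simp
    finally show ?thesis .
  qed
qed

definition conf :: "nat \<Rightarrow> (real^2) set" where
  "conf m = ringp m ` {..<6*m} \<union> cenp m ` {..<m}"

lemma conf_props:
  assumes m2: "2 \<le> m"
  shows "finite (conf m)" "card (conf m) = 7*m"
    "\<forall>p\<in>conf m. \<forall>q\<in>conf m. dist p q \<le> 1"
    "\<forall>z. card (conf m \<inter> cball z (1/4)) \<le> m"
proof -
  have m1: "1 \<le> m" using m2 by simp
  note pr = params[OF m1]
  define R where "R = ringp m ` {..<6*m}"
  define Cs where "Cs = cenp m ` {..<m}"
  have conf: "conf m = R \<union> Cs" by (simp add: conf_def R_def Cs_def)
  have rrb: "\<bar>rr m j - 1/2\<bar> \<le> bt m" for j using rr_bnd pr(5) by auto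
  have rnorm: "norm (ringp m j) = rr m j" for j
    using norm_ringp[of m j] rrb[of j] pr(6) by simp
  have rn1: "1/2 - bt m \<le> norm (ringp m j)" and rn2: "norm (ringp m j) \<le> 1/2 + bt m" for j
    using rnorm[of j] rrb[of j] by auto
  have cn: "norm (cenp m i) \<le> dl m" if "i < m" for i using cen_norm[OF m2 that] .
  have rinj: "inj_on (ringp m) {..<6*m}"
  proof
    fix j k assume "j \<in> {..<6*m}" "k \<in> {..<6*m}" "ringp m j = ringp m k"
    moreover have "j \<noteq> k \<Longrightarrow> kap m / 4 \<le> (dist (ringp m j) (ringp m k))^2"
      using ring_facts(1)[OF m1] calculation(1,2) by auto
    ultimately show "j = k" using pr(1) by (cases "j = k") auto
  qed
  have cinj: "inj_on (cenp m) {..<m}" by (rule cen_inj[OF m2])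
  have cR: "card R = 6*m" unfolding R_def using card_image[OF rinj] by simp
  have cC: "card Cs = m" unfolding Cs_def using card_image[OF cinj] by simp
  have disj: "R \<inter> Cs = {}"
  proof (rule ccontr)
    assume "R \<inter> Cs \<noteq> {}"
    then obtain j i where "i < m" "ringp m j = cenp m i" unfolding R_def Cs_def by auto
    then have "1/2 - bt m \<le> dl m" using rn1[of j] cn[of i] by auto
    then show False using pr by simp
  qed
  have finR: "finite R" "finite Cs" by (simp_all add: R_def Cs_def)
  show "finite (conf m)" unfolding conf using finR by simp
  show "card (conf m) = 7*m" unfolding conf using card_Un_disjoint[OF finR disj] cR cC by simp
  have inR: "\<And>p. p \<in> R \<Longrightarrow> \<exists>j<6*m. p = ringp m j" unfolding R_def by auto
  have inC: "\<And>p. p \<in> Cs \<Longrightarrow> \<exists>i<m. p = cenp m i" unfolding Cs_def by auto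
  have rc: "dist p q \<le> 1" if pR: "p \<in> R" and qC: "q \<in> Cs" for p q
  proof -
    obtain j where p: "p = ringp m j" using inR[OF pR] by auto
    obtain i where i: "i < m" "q = cenp m i" using inC[OF qC] by auto
    have "dist p q \<le> norm p + norm q" by (simp add: dist_norm norm_triangle_ineq4)
    also have "\<dots> \<le> (1/2 + bt m) + dl m" using rn2[of j] cn[OF i(1)] p i by simp
    also have "\<dots> \<le> 1" using pr by simp
    finally show ?thesis .
  qed
  show "\<forall>p\<in>conf m. \<forall>q\<in>conf m. dist p q \<le> 1"
  proof (intro ballI)
    fix p q assume "p \<in> conf m" "q \<in> conf m"
    then consider "p \<in> R" "q \<in> R" | "p \<in> R" "q \<in> Cs" | "p \<in> Cs" "q \<in> R" | "p \<in> Cs" "q \<in> Cs"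
      unfolding conf by blast
    then show "dist p q \<le> 1"
    proof cases
      case 1
      then obtain j k where "j < 6*m" "k < 6*m" "p = ringp m j" "q = ringp m k" using inR by blast
      then show ?thesis using ring_facts(3)[OF m1] by simp
    next
      case 2 then show ?thesis using rc by simp
    next
      case 3 then show ?thesis using rc[of q p] by (simp add: dist_commute)
    next
      case 4
      then obtain i k where "i < m" "k < m" "p = cenp m i" "q = cenp m k" using inC by blast
      then have "dist p q \<le> dl m + dl m"
        using cn by (metis dist_norm norm_triangle_ineq4 add_mono order_trans)
      then show ?thesis using pr by simp
    qed
  qed
  show "\<forall>z. card (conf m \<inter> cball z (1/4)) \<le> m"
  proof
    fix z :: "real^2"
    define D where "D = cball z (1/4::real)"
    have dD: "dist p q \<le> 1/2" if "p \<in> D" "q \<in> D" for p q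
    proof -
      have "dist p q \<le> dist p z + dist z q" by (rule dist_triangle)
      then show ?thesis using that unfolding D_def by (simp add: dist_commute)
    qed
    define J where "J = {j \<in> {..<6*m}. ringp m j \<in> D}"
    have RD: "R \<inter> D = ringp m ` J" unfolding R_def J_def by auto
    have cJ: "card J \<le> m"
    proof (rule comb)
      show "J \<subseteq> {..<6*m}" unfolding J_def by auto
      show "\<forall>j\<in>J. \<forall>k\<in>J. dcy m j k < m"
      proof (intro ballI)
        fix j k assume jk: "j \<in> J" "k \<in> J"
        have d: "dist (ringp m j) (ringp m k) \<le> 1/2" using jk dD unfolding J_def by auto
        show "dcy m j k < m"
        proof (rule ccontr)
          assume "\<not> dcy m j k < m"
          then have "1/4 < (dist (ringp m j) (ringp m k))^2"
            using ring_facts(2)[OF m1] jk unfolding J_def by auto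
          moreover have "(dist (ringp m j) (ringp m k))^2 \<le> (1/2)^2"
            using d by (intro power_mono) auto
          ultimately show False by (simp add: power2_eq_square)
        qed
      qed
    qed
    have finJ: "finite J" unfolding J_def by simp
    have cRD: "card (R \<inter> D) \<le> m" unfolding RD using card_image_le[OF finJ, of "ringp m"] cJ by linarith
    have split: "card (conf m \<inter> D) \<le> card (R \<inter> D) + card (Cs \<inter> D)"
    proof -
      have "conf m \<inter> D = (R \<inter> D) \<union> (Cs \<inter> D)" unfolding conf by blast
      then show ?thesis by (simp add: card_Un_le)
    qed
    have "card (conf m \<inter> D) \<le> m"
    proof (cases "Cs \<inter> D = {}")
      case True
      then show ?thesis using split cRD by simp
    next
      case False
      then obtain c where c: "c \<in> Cs" "c \<in> D" by auto
      obtain ic where ic: "ic < m" "c = cenp m ic" using inC[OF c(1)] by auto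
      have one: "p = q" if pRD: "p \<in> R \<inter> D" and qRD: "q \<in> R \<inter> D" for p q
      proof (rule ccontr)
        assume pq: "p \<noteq> q"
        obtain j where j: "j < 6*m" "p = ringp m j" using inR pRD by blast
        obtain k where k: "k < 6*m" "q = ringp m k" using inR qRD by blast
        have "j \<noteq> k" using pq j k by auto
        then have lb: "kap m / 4 \<le> (dist p q)^2" using ring_facts(1)[OF m1 j(1) k(1)] j k by simp
        have ub: "(dist p q)^2 \<le> 8*(dl m + bt m + (dl m)^2)"
        proof (rule lune2)
          show "dist z c \<le> 1/4" using c(2) unfolding D_def by simp
          show "norm c \<le> dl m" using cn ic by simp
          show "dist z p \<le> 1/4" "dist z q \<le> 1/4" using pRD qRD unfolding D_def by auto
          show "1/2 - bt m \<le> norm p" "1/2 - bt m \<le> norm q" using rn1 j k by auto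
          show "0 \<le> dl m" "dl m \<le> 1/100" "0 \<le> bt m" "bt m \<le> 1/100" using pr by auto
        qed
        have "dl m = kap m / 100" by (simp add: dl_def)
        moreover have "(dl m)^2 \<le> dl m / 200"
        proof -
          have "dl m * dl m \<le> dl m * (1/200)" using pr by (intro mult_left_mono) auto
          then show ?thesis by (simp add: power2_eq_square)
        qed
        ultimately have "8*(dl m + bt m + (dl m)^2) < kap m / 4" using pr by simp
        then show False using lb ub by simp
      qed
      have finRD: "finite (R \<inter> D)" using finR by simp
      have c1: "card (R \<inter> D) \<le> 1" using one finRD by (simp add: card_le_Suc0_iff_eq)
      show ?thesis
      proof (cases "R \<inter> D = {}")
        case True
        then have "card (Cs \<inter> D) \<le> m" using cC finR by (metis card_mono inf_le1)
        then show ?thesis using split True by simp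
      next
        case False
        then obtain p where p: "p \<in> R" "p \<in> D" by auto
        obtain j where j: "j < 6*m" "p = ringp m j" using inR p(1) by auto
        have "1/2 < dist p (cenp m 0) \<or> 1/2 < dist p (cenp m (m - 1))"
          by (rule cen_far[OF m2 rn1[of j, folded j(2)]])
        then obtain f where f: "f \<in> Cs" "1/2 < dist p f"
          unfolding Cs_def using m2 by (metis diff_less lessThan_iff rev_image_eqI zero_less_numeral
              le_trans one_le_numeral less_le_trans zero_less_one not_less_eq_eq)
        have "f \<notin> D" using f(2) dD[OF p(2)] by force
        then have "Cs \<inter> D \<subseteq> Cs - {f}" by auto
        then have "card (Cs \<inter> D) \<le> card (Cs - {f})" using finR by (intro card_mono) auto
        also have "\<dots> = m - 1" using f(1) cC finR by simp
        finally show ?thesis using split c1 m2 by simp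
      qed
    qed
    then show "card (conf m \<inter> cball z (1/4)) \<le> m" unfolding D_def .
  qed
qed

lemma ceil7:
  assumes "0 < n"
  shows "n \<le> 7 * nat \<lceil>real n / 7\<rceil>" "7 * nat \<lceil>real n / 7\<rceil> < n + 7"
proof -
  define c where "c = \<lceil>real n / 7\<rceil>"
  have c1: "real n / 7 \<le> of_int c" unfolding c_def by (rule le_of_int_ceiling)
  have c2: "of_int c < real n / 7 + 1" unfolding c_def by linarith
  have "0 \<le> real n / 7" by simp
  then have "(0::real) \<le> of_int c" using c1 by linarith
  then have c0: "0 \<le> c" by simp
  have e: "real (nat c) = of_int c" using c0 by simp
  have "real n \<le> 7 * real (nat c)" using c1 e by simp
  then show "n \<le> 7 * nat \<lceil>real n / 7\<rceil>" unfolding c_def[symmetric] by linarith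
  have "7 * real (nat c) < real n + 7" using c2 e by simp
  then show "7 * nat \<lceil>real n / 7\<rceil> < n + 7" unfolding c_def[symmetric] by linarith
qed

lemma lower:
  assumes P: "P \<in> point_family n" and n0: "0 < n"
  shows "\<exists>c. nat \<lceil>real n / 7\<rceil> \<le> card (P \<inter> cball c (1/4))"
proof -
  have fin: "finite P" "card P = n" "\<forall>x\<in>P. \<forall>y\<in>P. dist x y \<le> 1" using P by (auto simp: point_family_def)
  have ne: "P \<noteq> {}" using fin(2) n0 by auto
  obtain z where z: "\<forall>p\<in>P. \<exists>i<(7::nat). dist (z i) p \<le> 1/4" using cover7[OF fin(1) ne fin(3)] by blast
  define k where "k = nat \<lceil>real n / 7\<rceil>"
  have Pu: "P \<subseteq> (\<Union>i\<in>{..<7::nat}. P \<inter> cball (z i) (1/4))"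
  proof
    fix p assume pP: "p \<in> P"
    then obtain i where "i < 7" "dist (z i) p \<le> 1/4" using z by blast
    then show "p \<in> (\<Union>i\<in>{..<7::nat}. P \<inter> cball (z i) (1/4))" using pP by auto
  qed
  have "card P \<le> card (\<Union>i\<in>{..<7::nat}. P \<inter> cball (z i) (1/4))"
    by (rule card_mono[OF _ Pu]) (use fin(1) in simp)
  also have "\<dots> \<le> (\<Sum>i<7. card (P \<inter> cball (z i) (1/4)))" by (rule card_UN_le) simp
  finally have sum: "n \<le> (\<Sum>i<7. card (P \<inter> cball (z i) (1/4)))" using fin(2) by simp
  show ?thesis
  proof (rule ccontr)
    assume "\<not> ?thesis"
    then have nk: "\<not> k \<le> card (P \<inter> cball (z i) (1/4))" for i unfolding k_def by blast
    have lt: "card (P \<inter> cball (z i) (1/4)) \<le> k - 1" for i using nk[of i] by arith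
    have "(\<Sum>i<7. card (P \<inter> cball (z i) (1/4))) \<le> (\<Sum>i<(7::nat). k - 1)"
      by (rule sum_mono) (use lt in auto)
    then have "n \<le> 7 * (k - 1)" using sum by simp
    moreover have "7 * k < n + 7" "n \<le> 7 * k" using ceil7[OF n0] by (simp_all add: k_def)
    ultimately show False using n0 by arith
  qed
qed

lemma upper_from:
  fixes Q :: "(real^2) set"
  assumes "finite Q" "n \<le> card Q" "\<forall>p\<in>Q. \<forall>q\<in>Q. dist p q \<le> 1" "\<forall>c. card (Q \<inter> cball c r) \<le> K"
  shows "\<exists>P\<in>point_family n. \<forall>c. card (P \<inter> cball c r) \<le> K"
proof -
  obtain T where T: "T \<subseteq> Q" "card T = n" "finite T" using obtain_subset_with_card_n[OF assms(2)] by blast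
  have "T \<in> point_family n" using T assms(3) by (auto simp: point_family_def)
  moreover have "card (T \<inter> cball c r) \<le> K" for c
  proof -
    have "card (T \<inter> cball c r) \<le> card (Q \<inter> cball c r)" using T assms(1) by (intro card_mono) auto
    then show ?thesis using assms(4) by (meson order_trans)
  qed
  ultimately show ?thesis by blast
qed

lemma vec2_eq: "((vector [a, b] :: real^2) = vector [c, d]) \<longleftrightarrow> a = c \<and> b = d"
  by (metis vector_2)

definition s6 :: "(real^2) set" where
  "s6 = {vector [0,0], vector [52/100,0], vector [16/100,49/100], vector [-42/100,31/100],
         vector [-42/100,-31/100], vector [16/100,-49/100]}"

lemma s6_dist: "\<forall>p\<in>s6. \<forall>q\<in>s6. p \<noteq> q \<longrightarrow> 1/4 < (dist p q)^2 \<and> (dist p q)^2 \<le> 1"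
  unfolding s6_def by (simp add: dist2sq vec2_eq power_divide)

lemma s6_props:
  shows "finite s6" "card s6 = 6" "\<forall>p\<in>s6. \<forall>q\<in>s6. dist p q \<le> 1"
    "\<forall>c. card (s6 \<inter> cball c (1/4)) \<le> 1"
proof -
  show "finite s6" by (simp add: s6_def)
  show "card s6 = 6" unfolding s6_def by (simp add: vec2_eq)
  show "\<forall>p\<in>s6. \<forall>q\<in>s6. dist p q \<le> 1"
  proof (intro ballI)
    fix p q assume pq: "p \<in> s6" "q \<in> s6"
    show "dist p q \<le> 1"
    proof (cases "p = q")
      case True then show ?thesis by simp
    next
      case False
      then have "(dist p q)^2 \<le> 1^2" using s6_dist pq by simp
      then show ?thesis by (rule power2_le_imp_le) simp
    qed
  qed
  show "\<forall>c. card (s6 \<inter> cball c (1/4)) \<le> 1"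
  proof
    fix c :: "real^2"
    have "\<forall>a1\<in>s6 \<inter> cball c (1/4). \<forall>a2\<in>s6 \<inter> cball c (1/4). a1 = a2"
    proof (intro ballI)
      fix p q assume pq: "p \<in> s6 \<inter> cball c (1/4)" "q \<in> s6 \<inter> cball c (1/4)"
      show "p = q"
      proof (rule ccontr)
        assume "p \<noteq> q"
        then have g: "1/4 < (dist p q)^2" using s6_dist pq by auto
        have "dist p q \<le> dist p c + dist c q" by (rule dist_triangle)
        then have "dist p q \<le> 1/2" using pq by (simp add: mem_cball dist_commute)
        then have "(dist p q)^2 \<le> (1/2)^2" by (intro power_mono) auto
        then show False using g by (simp add: power2_eq_square)
      qed
    qed
    moreover have "finite (s6 \<inter> cball c (1/4))" by (simp add: s6_def)
    ultimately show "card (s6 \<inter> cball c (1/4)) \<le> 1"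
      using card_le_Suc0_iff_eq by (metis One_nat_def)
  qed
qed

lemma N_eq:
  assumes "\<forall>P\<in>point_family n. \<exists>c. K \<le> card (P \<inter> cball c r)"
    and "\<exists>P\<in>point_family n. \<forall>c. card (P \<inter> cball c r) \<le> K"
  shows "N_cover n r = K"
  unfolding N_cover_def
proof (rule Greatest_equality)
  show "\<forall>P\<in>point_family n. \<exists>c. K \<le> card (P \<inter> cball c r)" by (rule assms(1))
next
  fix y assume y: "\<forall>P\<in>point_family n. \<exists>c. y \<le> card (P \<inter> cball c r)"
  obtain P where P: "P \<in> point_family n" "\<forall>c. card (P \<inter> cball c r) \<le> K" using assms(2) by blast
  obtain c where "y \<le> card (P \<inter> cball c r)" using y P(1) by blast
  then show "y \<le> K" using P(2) by (meson order_trans)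
qed

theorem theorem5:
  shows "(\<forall>n::nat. 0 < n \<and> n \<noteq> 7 \<longrightarrow> N_cover n (1/4) = nat \<lceil>real n / 7\<rceil>)
         \<and> 1 \<le> N_cover 7 (1/4) \<and> N_cover 7 (1/4) \<le> 2"
proof (intro conjI allI impI)
  fix n :: nat assume h: "0 < n \<and> n \<noteq> 7"
  then have n0: "0 < n" and n7: "n \<noteq> 7" by auto
  define k where "k = nat \<lceil>real n / 7\<rceil>"
  have k1: "n \<le> 7*k" "7*k < n + 7" using ceil7[OF n0] by (simp_all add: k_def)
  have low: "\<forall>P\<in>point_family n. \<exists>c. k \<le> card (P \<inter> cball c (1/4))"
    using lower n0 by (simp add: k_def)
  have up: "\<exists>P\<in>point_family n. \<forall>c. card (P \<inter> cball c (1/4)) \<le> k"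
  proof (cases "n \<le> 6")
    case True
    then have "k = 1" using k1 n0 by linarith
    then show ?thesis using upper_from[OF s6_props(1) _ s6_props(3) s6_props(4)] s6_props(2) True by simp
  next
    case False
    then have n8: "8 \<le> n" using n7 by simp
    then have k2: "2 \<le> k" using k1 by linarith
    show ?thesis using upper_from[OF conf_props(1)[OF k2] _ conf_props(3)[OF k2] conf_props(4)[OF k2]]
      conf_props(2)[OF k2] k1 by simp
  qed
  show "N_cover n (1/4) = nat \<lceil>real n / 7\<rceil>" using N_eq[OF low up] by (simp add: k_def)
next
  define Q where "Q = (\<lambda>k. \<forall>P\<in>point_family 7. \<exists>c. k \<le> card (P \<inter> cball c (1/4::real)))"
  have Q1: "Q 1" unfolding Q_def using lower[of _ 7] by simp
  have "\<exists>P\<in>point_family 7. \<forall>c. card (P \<inter> cball c (1/4::real)) \<le> 2"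
    by (rule upper_from[OF conf_props(1)[of 2] _ conf_props(3)[of 2] conf_props(4)[of 2]])
      (simp_all add: conf_props(2))
  then obtain P0 where P0: "P0 \<in> point_family 7" "\<forall>c. card (P0 \<inter> cball c (1/4::real)) \<le> 2"
    by blast
  have bnd: "y \<le> 2" if Qy: "Q y" for y
  proof -
    obtain c where "y \<le> card (P0 \<inter> cball c (1/4))" using Qy P0(1) unfolding Q_def by blast
    then show ?thesis using P0(2) by (meson order_trans)
  qed
  have NQ: "N_cover 7 (1/4) = Greatest Q" unfolding N_cover_def Q_def ..
  show "1 \<le> N_cover 7 (1/4)" unfolding NQ by (rule Greatest_le_nat[of Q 1 2, OF Q1 bnd])
  show "N_cover 7 (1/4) \<le> 2" unfolding NQ by (rule bnd[OF GreatestI_nat[of Q 1 2, OF Q1 bnd]])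
qed


end
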